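(* Let $G$ be a $\preceq$-freezing $d$-dimensional cellular automaton that simulates a $d$-dimensional cellular automaton $F$ via an encoding map $\bar\phi$. Then there exists a finite set $E\subseteq\mathbb{Z}^d$ such that, whenever a configuration $y$ is $E$-locally reachable by $F$ from a configuration $x$, we have $\bar\phi(y)\preceq\bar\phi(x)$ (cellwise, i.e. $\bar\phi(y)_z\preceq\bar\phi(x)_z$ for all $z\in\mathbb{Z}^d$).
   Context: A $d$-dimensional cellular automaton is $F=(d,Q,N,f)$ with $Q$ finite, $N\subset\mathbb{Z}^d$ finite, $f:Q^N\to Q$, global map $F(c)_z=f(c|_{z+N})$; it is $\preceq$-freezing for a partial order $\preceq$ on $Q$ if $F(c)_z\preceq c_z$ for all $c,z$. Simulation: $G$ simulates $F$ if there exist $T>0$, a rectangular block $B\subseteq\mathbb{Z}^d$ with size-vector $b$, a finite $C\subset\mathbb{Z}^d$ with $\vec0\in C$, and $\phi:Q_F^C\to Q_G^B$ such that the encoding map $\bar\phi$ defined by $\bar\phi(c)_{bz+r}=\phi(c|_{z+C})_r$ ($z\in\mathbb{Z}^d$, $r\in B$, $bz$ componentwise) is injective and satisfies $\bar\phi(F(c))=G^T(\bar\phi(c))$ for all $c$. Given a finite $E\subseteq\mathbb{Z}^d$, a configuration $y$ is $E$-locally reachable by $F$ from a configuration $x$ if for every $i\in\mathbb{Z}^d$ there are configurations $x^i,y^i$ with $x^i|_{i+E}=x|_{i+E}$, $y^i|_{i+E}=y|_{i+E}$, and $F^t(x^i)=y^i$ for some $t\geq0$. *)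

theory Defs
  imports Main
begin

text \<open>Points of Z^d are functions 'd => int for a finite index type 'd (so d = CARD('d)).
A configuration over state type 'q is a map (('d => int) => 'q).\<close>

type_synonym 'd pt = "'d \<Rightarrow> int"

definition vadd :: "'d pt \<Rightarrow> 'd pt \<Rightarrow> 'd pt" where
  "vadd u v = (\<lambda>k. u k + v k)"

definition vzero :: "'d pt" where
  "vzero = (\<lambda>k. 0)"

definition pattern :: "'d pt set \<Rightarrow> ('d pt \<Rightarrow> 'q) \<Rightarrow> 'd pt \<Rightarrow> ('d pt \<Rightarrow> 'q)" where
  "pattern W c z = (\<lambda>n. if n \<in> W then c (vadd z n) else undefined)"

text \<open>A cellular automaton (d, Q, N, f): Q is the (finite) type 'q, N a finite neighbourhood.\<close>
definition is_CA :: "'d::finite pt set \<Rightarrow> (('d pt \<Rightarrow> 'q::finite) \<Rightarrow> 'q) \<Rightarrow> bool" where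
  "is_CA N f \<longleftrightarrow> finite N"

definition global :: "'d pt set \<Rightarrow> (('d pt \<Rightarrow> 'q) \<Rightarrow> 'q) \<Rightarrow> ('d pt \<Rightarrow> 'q) \<Rightarrow> ('d pt \<Rightarrow> 'q)" where
  "global N f c = (\<lambda>z. f (pattern N c z))"

definition is_partial_order :: "('q \<Rightarrow> 'q \<Rightarrow> bool) \<Rightarrow> bool" where
  "is_partial_order le \<longleftrightarrow> (\<forall>a. le a a) \<and> (\<forall>a b. le a b \<and> le b a \<longrightarrow> a = b)
     \<and> (\<forall>a b c. le a b \<and> le b c \<longrightarrow> le a c)"

definition freezing :: "('q \<Rightarrow> 'q \<Rightarrow> bool) \<Rightarrow> 'd pt set \<Rightarrow> (('d pt \<Rightarrow> 'q) \<Rightarrow> 'q) \<Rightarrow> bool" where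
  "freezing le N f \<longleftrightarrow> (\<forall>c z. le (global N f c z) (c z))"

definition block :: "'d pt \<Rightarrow> 'd pt set" where
  "block b = {r. \<forall>k. 0 \<le> r k \<and> r k < b k}"

text \<open>Encoding map: phibar(c)_{bz+r} = phi(c|_{z+C})_r for r in B; every point p is uniquely
bz + r with z = p div b, r = p mod b componentwise.\<close>
definition encode :: "'d pt \<Rightarrow> 'd pt set \<Rightarrow> (('d pt \<Rightarrow> 'q) \<Rightarrow> ('d pt \<Rightarrow> 'g))
    \<Rightarrow> ('d pt \<Rightarrow> 'q) \<Rightarrow> ('d pt \<Rightarrow> 'g)" where
  "encode b C phi c = (\<lambda>p. phi (pattern C c (\<lambda>k. p k div b k)) (\<lambda>k. p k mod b k))"

definition simulates_via ::
  "'d pt set \<Rightarrow> (('d pt \<Rightarrow> 'g) \<Rightarrow> 'g) \<Rightarrow> 'd pt set \<Rightarrow> (('d pt \<Rightarrow> 'q) \<Rightarrow> 'q)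
   \<Rightarrow> nat \<Rightarrow> 'd pt \<Rightarrow> 'd pt set \<Rightarrow> (('d pt \<Rightarrow> 'q) \<Rightarrow> ('d pt \<Rightarrow> 'g)) \<Rightarrow> bool" where
  "simulates_via NG fG NF fF T b C phi \<longleftrightarrow>
     T > 0 \<and> (\<forall>k. b k > 0) \<and> finite C \<and> vzero \<in> C \<and>
     inj (encode b C phi) \<and>
     (\<forall>c. encode b C phi (global NF fF c) = (global NG fG ^^ T) (encode b C phi c))"

definition locally_reachable ::
  "'d pt set \<Rightarrow> (('d pt \<Rightarrow> 'q) \<Rightarrow> 'q) \<Rightarrow> 'd pt set \<Rightarrow> ('d pt \<Rightarrow> 'q) \<Rightarrow> ('d pt \<Rightarrow> 'q) \<Rightarrow> bool" where
  "locally_reachable NF fF E x y \<longleftrightarrow>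
     (\<forall>i. \<exists>xi yi t. (\<forall>e\<in>E. xi (vadd i e) = x (vadd i e)) \<and>
                     (\<forall>e\<in>E. yi (vadd i e) = y (vadd i e)) \<and>
                     (global NF fF ^^ t) xi = yi)"

end

theory Submission
  imports Defs
begin

lemma iter_freeze:
  assumes po: "is_partial_order le" and fr: "freezing le NG fG"
  shows "le ((global NG fG ^^ n) c z) (c z)"
proof (induction n)
  case 0
  have "\<forall>a. le a a" using po unfolding is_partial_order_def by blast
  then show ?case by simp
next
  case (Suc n)
  have "le (global NG fG ((global NG fG ^^ n) c) z) ((global NG fG ^^ n) c z)"
    using fr by (simp add: freezing_def)
  moreover have "\<And>a b c. le a b \<Longrightarrow> le b c \<Longrightarrow> le a c"
    using po unfolding is_partial_order_def by blast
  ultimately have "le (global NG fG ((global NG fG ^^ n) c) z) (c z)" using Suc.IH by blast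
  then show ?case by simp
qed

lemma sim_freeze:
  assumes po: "is_partial_order le" and fr: "freezing le NG fG"
    and sim: "simulates_via NG fG NF fF T b C phi"
  shows "le (encode b C phi ((global NF fF ^^ t) c) p) (encode b C phi c p)"
proof (induction t)
  case 0
  have "\<forall>a. le a a" using po unfolding is_partial_order_def by blast
  then show ?case by simp
next
  case (Suc t)
  have "encode b C phi ((global NF fF ^^ Suc t) c)
        = (global NG fG ^^ T) (encode b C phi ((global NF fF ^^ t) c))"
    using sim unfolding simulates_via_def by simp
  moreover have "le ((global NG fG ^^ T) (encode b C phi ((global NF fF ^^ t) c)) p)
      (encode b C phi ((global NF fF ^^ t) c) p)"
    using iter_freeze[OF po fr] by blast
  moreover have "\<And>a b c. le a b \<Longrightarrow> le b c \<Longrightarrow> le a c"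
    using po unfolding is_partial_order_def by blast
  ultimately have "le ((global NG fG ^^ T) (encode b C phi ((global NF fF ^^ t) c)) p) (encode b C phi c p)"
    using Suc.IH by blast
  then show ?case using \<open>encode b C phi ((global NF fF ^^ Suc t) c) = _\<close> by simp
qed

lemma encode_local:
  assumes "\<forall>e\<in>C. u (vadd i e) = v (vadd i e)" and "i = (\<lambda>k. p k div b k)"
  shows "encode b C phi u p = encode b C phi v p"
proof -
  have "pattern C u i = pattern C v i"
    using assms(1) by (auto simp: pattern_def)
  then show ?thesis using assms(2) by (simp add: encode_def)
qed

theorem mainTheorem9:
  fixes NF :: "'d::finite pt set" and fF :: "('d pt \<Rightarrow> 'q::finite) \<Rightarrow> 'q"
    and NG :: "'d pt set" and fG :: "('d pt \<Rightarrow> 'g::finite) \<Rightarrow> 'g"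
    and le :: "'g \<Rightarrow> 'g \<Rightarrow> bool"
    and T :: nat and b :: "'d pt" and C :: "'d pt set"
    and phi :: "('d pt \<Rightarrow> 'q) \<Rightarrow> ('d pt \<Rightarrow> 'g)"
  assumes "is_CA NF fF" and "is_CA NG fG"
    and "is_partial_order le" and "freezing le NG fG"
    and "simulates_via NG fG NF fF T b C phi"
  shows "\<exists>E. finite E \<and> (\<forall>x y. locally_reachable NF fF E x y \<longrightarrow>
            (\<forall>z. le (encode b C phi y z) (encode b C phi x z)))"
proof (intro exI conjI allI impI)
  show "finite C" using assms(5) by (simp add: simulates_via_def)
next
  fix x y z
  assume lr: "locally_reachable NF fF C x y"
  define i where "i = (\<lambda>k. z k div b k)"
  obtain xi yi t where hx: "\<forall>e\<in>C. xi (vadd i e) = x (vadd i e)"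
    and hy: "\<forall>e\<in>C. yi (vadd i e) = y (vadd i e)"
    and ht: "(global NF fF ^^ t) xi = yi"
    using lr unfolding locally_reachable_def by blast
  have "le (encode b C phi yi z) (encode b C phi xi z)"
    using sim_freeze[OF assms(3,4,5), of t xi z] ht by simp
  moreover have "encode b C phi yi z = encode b C phi y z"
    by (rule encode_local[OF hy i_def])
  moreover have "encode b C phi xi z = encode b C phi x z"
    by (rule encode_local[OF hx i_def])
  ultimately show "le (encode b C phi y z) (encode b C phi x z)" by simp
qed

end
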